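(* Let $X$ be a commutative complex Banach algebra. Then for every $a\in X$ the multiplication operator $M_a$, $M_ab=ab$, is not weakly hypercyclic.
   Context: Banach algebras need not be unital. An operator $T\in L(X)$ is weakly hypercyclic if there is $x\in X$ such that $\{T^nx:n\in\mathbb{Z}_+\}$ is dense in $X$ with respect to the weak topology. *)

theory Defs
  imports "HOL-Analysis.Analysis"
begin

text \<open>Complex scalar multiplication on a real Banach algebra, making it a complex
  Banach algebra: a complex vector space structure extending the real one, with
  homogeneous norm, and compatible with the (bilinear) multiplication.\<close>
definition complex_algebra_scaling :: "(complex \<Rightarrow> 'a::{banach, real_normed_algebra} \<Rightarrow> 'a) \<Rightarrow> bool" where
  "complex_algebra_scaling smc \<longleftrightarrow>
     (\<forall>c x y. smc c (x + y) = smc c x + smc c y) \<and>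
     (\<forall>c d x. smc (c + d) x = smc c x + smc d x) \<and>
     (\<forall>c d x. smc (c * d) x = smc c (smc d x)) \<and>
     (\<forall>x. smc 1 x = x) \<and>
     (\<forall>r x. smc (complex_of_real r) x = scaleR r x) \<and>
     (\<forall>c x. norm (smc c x) = norm c * norm x) \<and>
     (\<forall>c x y. smc c (x * y) = smc c x * y) \<and>
     (\<forall>c x y. smc c (x * y) = x * smc c y)"

definition cbounded_linear_functional :: "(complex \<Rightarrow> 'a::real_normed_vector \<Rightarrow> 'a) \<Rightarrow> ('a \<Rightarrow> complex) \<Rightarrow> bool" where
  "cbounded_linear_functional smc f \<longleftrightarrow>
     (\<forall>x y. f (x + y) = f x + f y) \<and>
     (\<forall>c x. f (smc c x) = c * f x) \<and>
     (\<exists>K. \<forall>x. norm (f x) \<le> K * norm x)"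

text \<open>Density in the weak topology: every basic weak neighbourhood
  {y. \<forall>f\<in>F. |f y - f x| < e} (F a finite set of continuous linear functionals)
  meets S.\<close>
definition weakly_dense :: "(complex \<Rightarrow> 'a::real_normed_vector \<Rightarrow> 'a) \<Rightarrow> 'a set \<Rightarrow> bool" where
  "weakly_dense smc S \<longleftrightarrow>
     (\<forall>x F e. finite F \<and> (\<forall>f\<in>F. cbounded_linear_functional smc f) \<and> e > 0 \<longrightarrow>
        (\<exists>s\<in>S. \<forall>f\<in>F. norm (f s - f x) < e))"

definition weakly_hypercyclic :: "(complex \<Rightarrow> 'a::real_normed_vector \<Rightarrow> 'a) \<Rightarrow> ('a \<Rightarrow> 'a) \<Rightarrow> bool" where
  "weakly_hypercyclic smc T \<longleftrightarrow> (\<exists>x. weakly_dense smc {(T ^^ n) x | n. True})"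

end

theory Submission
  imports Defs
begin


context
  fixes smc :: "complex \<Rightarrow> 'a::{banach, real_normed_algebra, comm_ring} \<Rightarrow> 'a"
  assumes cas: "complex_algebra_scaling smc"
begin

lemma smc_add: "smc c (x + y) = smc c x + smc c y"
  using cas unfolding complex_algebra_scaling_def by blast
lemma smc_add_left: "smc (c + d) x = smc c x + smc d x"
  using cas unfolding complex_algebra_scaling_def by blast
lemma smc_smc: "smc c (smc d x) = smc (c * d) x"
  using cas unfolding complex_algebra_scaling_def by metis
lemma smc_one: "smc 1 x = x"
  using cas unfolding complex_algebra_scaling_def by blast
lemma smc_real: "smc (complex_of_real r) x = r *\<^sub>R x"
  using cas unfolding complex_algebra_scaling_def by blast
lemma norm_smc: "norm (smc c x) = norm c * norm x"
  using cas unfolding complex_algebra_scaling_def by blast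
lemma smc_mult_left: "smc c x * y = smc c (x * y)"
  using cas unfolding complex_algebra_scaling_def by metis
lemma smc_mult_right: "x * smc c y = smc c (x * y)"
  using cas unfolding complex_algebra_scaling_def by metis

lemma smc_zero_left: "smc 0 x = 0"
  using smc_real[of 0 x] by simp
lemma smc_zero_right: "smc c 0 = 0"
  using smc_add[of c 0 0] by simp
lemma smc_minus: "smc c (- x) = - smc c x"
  using smc_add[of c x "-x"] smc_zero_right by (simp add: eq_neg_iff_add_eq_0 add.commute)
lemma smc_diff: "smc c (x - y) = smc c x - smc c y"
  using smc_add[of c x "-y"] smc_minus by simp
lemma smc_minus_left: "smc (- c) x = - smc c x"
  using smc_add_left[of c "-c" x] smc_zero_left by (simp add: eq_neg_iff_add_eq_0 add.commute)
lemma smc_scaleR: "smc c (r *\<^sub>R x) = r *\<^sub>R smc c x"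
  by (metis smc_real smc_smc mult.commute)
lemma smc_comm: "smc c (smc d x) = smc d (smc c x)"
  by (simp add: smc_smc mult.commute)

lemma bounded_linear_smc: "bounded_linear (smc c)"
proof (rule bounded_linear_intro[where K="norm c"])
  show "smc c (x + y) = smc c x + smc c y" for x y by (rule smc_add)
  show "smc c (r *\<^sub>R x) = r *\<^sub>R smc c x" for r x by (rule smc_scaleR)
  show "norm (smc c x) \<le> norm x * norm c" for x by (simp add: norm_smc)
qed

lemma continuous_on_smc: "continuous_on S (smc c)"
  using bounded_linear_smc linear_continuous_on by blast

end

section \<open>Real Hahn-Banach\<close>

definition ext_graphs :: "'a::real_normed_vector set \<Rightarrow> ('a \<Rightarrow> real) \<Rightarrow> real \<Rightarrow> ('a \<times> real) set set" where
  "ext_graphs W f K = {G. (\<forall>x u v. (x,u)\<in>G \<longrightarrow> (x,v)\<in>G \<longrightarrow> u=v) \<and> (\<forall>w\<in>W. (w, f w) \<in> G)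
     \<and> (\<forall>x u y v. (x,u)\<in>G \<longrightarrow> (y,v)\<in>G \<longrightarrow> (x+y, u+v)\<in>G)
     \<and> (\<forall>x u c. (x,u)\<in>G \<longrightarrow> (c *\<^sub>R x, c*u)\<in>G) \<and> (\<forall>x u. (x,u)\<in>G \<longrightarrow> u \<le> K * norm x)}"

lemma real_HB:
  fixes f :: "'a::real_normed_vector \<Rightarrow> real"
  assumes W: "subspace W"
    and fadd: "\<And>x y. x\<in>W \<Longrightarrow> y\<in>W \<Longrightarrow> f (x+y) = f x + f y"
    and fscale: "\<And>x c. x\<in>W \<Longrightarrow> f (c *\<^sub>R x) = c * f x"
    and fbound: "\<And>x. x\<in>W \<Longrightarrow> f x \<le> K * norm x"
    and K0: "K \<ge> 0"
  shows "\<exists>g. linear g \<and> (\<forall>x\<in>W. g x = f x) \<and> (\<forall>x. g x \<le> K * norm x)"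
proof -
  define A where "A = ext_graphs W f K"
  define G0 where "G0 = {(w, f w) | w. w \<in> W}"
  have G0A: "G0 \<in> A"
    unfolding A_def ext_graphs_def G0_def
    using W fadd fscale fbound by (auto simp: subspace_def)
  have "\<forall>C\<in>chains A. \<exists>U\<in>A. \<forall>X\<in>C. X \<subseteq> U"
  proof
    fix C assume C: "C \<in> chains A"
    show "\<exists>U\<in>A. \<forall>X\<in>C. X \<subseteq> U"
    proof (cases "C = {}")
      case True then show ?thesis using G0A by blast
    next
      case False
      then obtain G1 where G1: "G1 \<in> C" by blast
      have CA: "C \<subseteq> A" and ch: "\<And>X Y. X\<in>C \<Longrightarrow> Y\<in>C \<Longrightarrow> X \<subseteq> Y \<or> Y \<subseteq> X"
        using C unfolding chains_def chain_subset_def by blast+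
      have two: "\<exists>G\<in>C. p \<in> G \<and> q \<in> G" if "p \<in> \<Union>C" "q \<in> \<Union>C" for p q
        using that ch by blast
      have "\<Union>C \<in> A"
        unfolding A_def ext_graphs_def
      proof (intro CollectI conjI allI impI ballI)
        fix x u v assume "(x,u) \<in> \<Union>C" "(x,v) \<in> \<Union>C"
        then obtain G where "G\<in>C" "(x,u)\<in>G" "(x,v)\<in>G" using two by blast
        then show "u = v" using CA unfolding A_def ext_graphs_def by blast
      next
        fix w assume "w \<in> W"
        then show "(w, f w) \<in> \<Union>C" using G1 CA unfolding A_def ext_graphs_def by blast
      next
        fix x u y v assume "(x,u) \<in> \<Union>C" "(y,v) \<in> \<Union>C"
        then obtain G where "G\<in>C" "(x,u)\<in>G" "(y,v)\<in>G" using two by blast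
        then show "(x+y, u+v) \<in> \<Union>C" using CA unfolding A_def ext_graphs_def by blast
      next
        fix x u c assume "(x,u) \<in> \<Union>C"
        then obtain G where "G\<in>C" "(x,u)\<in>G" by blast
        then show "(c *\<^sub>R x, c*u) \<in> \<Union>C" using CA unfolding A_def ext_graphs_def by blast
      next
        fix x u assume "(x,u) \<in> \<Union>C"
        then obtain G where "G\<in>C" "(x,u)\<in>G" by blast
        then show "u \<le> K * norm x" using CA unfolding A_def ext_graphs_def by blast
      qed
      then show ?thesis by blast
    qed
  qed
  from Zorn_Lemma2[OF this] obtain M where MA: "M \<in> A" and Mmax: "\<And>X. X\<in>A \<Longrightarrow> M \<subseteq> X \<Longrightarrow> X = M"
    by blast
  have Mfun: "\<And>x u v. (x,u)\<in>M \<Longrightarrow> (x,v)\<in>M \<Longrightarrow> u=v"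
   and MW: "\<And>w. w\<in>W \<Longrightarrow> (w, f w) \<in> M"
   and Madd: "\<And>x u y v. (x,u)\<in>M \<Longrightarrow> (y,v)\<in>M \<Longrightarrow> (x+y, u+v)\<in>M"
   and Mscale: "\<And>x u c. (x,u)\<in>M \<Longrightarrow> (c *\<^sub>R x, c*u)\<in>M"
   and Mbound: "\<And>x u. (x,u)\<in>M \<Longrightarrow> u \<le> K * norm x"
    using MA unfolding A_def ext_graphs_def by blast+
  have M0: "(0,0) \<in> M" using MW[of 0] Mscale[of 0 "f 0" 0] W by (auto simp: subspace_def)
  have total: "\<exists>u. (z,u) \<in> M" for z
  proof (rule ccontr)
    assume nz: "\<not> (\<exists>u. (z,u) \<in> M)"
    define S where "S = {u - K * norm (y - z) | y u. (y,u) \<in> M}"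
    have Sne: "S \<noteq> {}" using M0 unfolding S_def by blast
    have Sub: "s \<le> K * norm (x + z) - v" if "s \<in> S" "(x,v) \<in> M" for s x v
    proof -
      obtain y u where yu: "(y,u) \<in> M" "s = u - K * norm (y - z)" using \<open>s\<in>S\<close> unfolding S_def by blast
      have "u + v \<le> K * norm (y + x)" using Mbound[OF Madd[OF yu(1) that(2)]] .
      also have "K * norm (y + x) \<le> K * norm (y - z) + K * norm (x + z)"
      proof -
        have "norm (y + x) \<le> norm (y - z) + norm (x + z)"
          using norm_triangle_ineq[of "y - z" "x + z"] by simp
        then show ?thesis using K0 by (simp add: distrib_left[symmetric] mult_left_mono)
      qed
      finally show ?thesis using yu(2) by simp
    qed
    define c where "c = Sup S"
    have c_ge: "u - K * norm (y - z) \<le> c" if "(y,u) \<in> M" for y u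
      unfolding c_def
    proof (rule cSup_upper)
      show "u - K * norm (y - z) \<in> S" using that unfolding S_def by blast
      show "bdd_above S" unfolding bdd_above_def using Sub[OF _ M0] by blast
    qed
    have c_le: "c \<le> K * norm (x + z) - v" if "(x,v) \<in> M" for x v
      unfolding c_def by (rule cSup_least[OF Sne]) (use Sub that in blast)
    define M' where "M' = {(x + t *\<^sub>R z, u + t * c) | x u t. (x,u) \<in> M}"
    have dom: "\<And>x u. (x,u) \<in> M \<Longrightarrow> (x, u) \<in> M" by simp
    have uniq: "x = x' \<and> t = t'" if "(x,u)\<in>M" "(x',u')\<in>M" "x + t *\<^sub>R z = x' + t' *\<^sub>R z" for x u x' u' t t'
    proof (cases "t = t'")
      case True then show ?thesis using that by simp
    next
      case False
      have "(t - t') *\<^sub>R z = x' - x" using that(3) by (simp add: algebra_simps)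
      then have "(1/(t - t')) *\<^sub>R ((t - t') *\<^sub>R z) = (1/(t - t')) *\<^sub>R (x' - x)" by simp
      then have "z = (1/(t - t')) *\<^sub>R (x' - x)" using False by simp
      moreover have "(x' - x, u' - u) \<in> M"
        using Madd[OF that(2) Mscale[OF that(1), of "-1"]] by simp
      ultimately have "(z, (1/(t-t')) * (u' - u)) \<in> M" using Mscale by metis
      then show ?thesis using nz by blast
    qed
    have M'A: "M' \<in> A"
      unfolding A_def ext_graphs_def
    proof (intro CollectI conjI allI impI ballI)
      fix y p q assume "(y,p) \<in> M'" "(y,q) \<in> M'"
      then obtain x u t x' u' t' where a: "(x,u)\<in>M" "y = x + t *\<^sub>R z" "p = u + t*c"
        and b: "(x',u')\<in>M" "y = x' + t' *\<^sub>R z" "q = u' + t'*c" unfolding M'_def by blast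
      then have "x = x' \<and> t = t'" using uniq by metis
      then show "p = q" using a b Mfun by blast
    next
      fix w assume "w\<in>W" then show "(w, f w) \<in> M'"
        unfolding M'_def using MW by force
    next
      fix y p y' q assume "(y,p) \<in> M'" "(y',q) \<in> M'"
      then obtain x u t x' u' t' where a: "(x,u)\<in>M" "y = x + t *\<^sub>R z" "p = u + t*c"
        and b: "(x',u')\<in>M" "y' = x' + t' *\<^sub>R z" "q = u' + t'*c" unfolding M'_def by blast
      have "y + y' = (x + x') + (t + t') *\<^sub>R z" "p + q = (u + u') + (t + t') * c"
        using a b by (auto simp: algebra_simps)
      then show "(y + y', p + q) \<in> M'" unfolding M'_def using Madd[OF a(1) b(1)] by blast
    next
      fix y p r assume "(y,p) \<in> M'"
      then obtain x u t where a: "(x,u)\<in>M" "y = x + t *\<^sub>R z" "p = u + t*c" unfolding M'_def by blast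
      have "r *\<^sub>R y = r *\<^sub>R x + (r*t) *\<^sub>R z" "r * p = r * u + (r * t) * c"
        using a by (auto simp: algebra_simps)
      then show "(r *\<^sub>R y, r * p) \<in> M'" unfolding M'_def using Mscale[OF a(1)] by blast
    next
      fix y p assume "(y,p) \<in> M'"
      then obtain x u t where a: "(x,u)\<in>M" "y = x + t *\<^sub>R z" "p = u + t*c" unfolding M'_def by blast
      consider "t = 0" | "t > 0" | "t < 0" by linarith
      then show "p \<le> K * norm y"
      proof cases
        case 1 then show ?thesis using a Mbound by simp
      next
        case 2
        have "(inverse t *\<^sub>R x, inverse t * u) \<in> M" using Mscale[OF a(1)] .
        from c_le[OF this] have "c \<le> K * norm (inverse t *\<^sub>R x + z) - inverse t * u" .
        then have "t * c \<le> t * (K * norm (inverse t *\<^sub>R x + z) - inverse t * u)"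
          using 2 by (simp add: mult_left_mono)
        also have "\<dots> = K * (t * norm (inverse t *\<^sub>R x + z)) - u" using 2 by (simp add: algebra_simps)
        also have "t * norm (inverse t *\<^sub>R x + z) = norm (x + t *\<^sub>R z)"
        proof -
          have "x + t *\<^sub>R z = t *\<^sub>R (inverse t *\<^sub>R x + z)" using 2 by (simp add: algebra_simps)
          then show ?thesis using 2 by simp
        qed
        finally show ?thesis using a by simp
      next
        case 3
        define s where "s = - t"
        have s: "s > 0" using 3 s_def by simp
        have "(inverse s *\<^sub>R x, inverse s * u) \<in> M" using Mscale[OF a(1)] .
        from c_ge[OF this] have "inverse s * u - K * norm (inverse s *\<^sub>R x - z) \<le> c" .
        then have "s * (inverse s * u - K * norm (inverse s *\<^sub>R x - z)) \<le> s * c"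
          using s by (simp add: mult_left_mono)
        also have "s * (inverse s * u - K * norm (inverse s *\<^sub>R x - z)) = u - K * (s * norm (inverse s *\<^sub>R x - z))"
          using s by (simp add: algebra_simps)
        also have "s * norm (inverse s *\<^sub>R x - z) = norm (x + t *\<^sub>R z)"
        proof -
          have "x + t *\<^sub>R z = s *\<^sub>R (inverse s *\<^sub>R x - z)" using s by (simp add: algebra_simps s_def)
          then show ?thesis using s by simp
        qed
        finally show ?thesis using a s_def by simp
      qed
    qed
    have "M \<subseteq> M'" unfolding M'_def by force
    from Mmax[OF M'A this] have "M' = M" .
    moreover have "(z, c) \<in> M'" unfolding M'_def using M0 by force
    ultimately show False using nz by blast
  qed
  define g where "g x = (THE u. (x,u) \<in> M)" for x
  have gM: "(x, g x) \<in> M" for x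
    unfolding g_def using total[of x] Mfun by (metis theI)
  have geq: "(x,u) \<in> M \<Longrightarrow> g x = u" for x u using gM Mfun by blast
  have "linear g"
    unfolding linear_iff
    using geq Madd Mscale gM by simp
  moreover have "\<forall>x\<in>W. g x = f x" using geq MW by blast
  moreover have "\<forall>x. g x \<le> K * norm x" using gM Mbound by blast
  ultimately show ?thesis by blast
qed




context
  fixes smc :: "complex \<Rightarrow> 'a::{banach, real_normed_algebra, comm_ring} \<Rightarrow> 'a"
  assumes cas: "complex_algebra_scaling smc"
begin

lemma complex_HB:
  assumes clV: "closed V" and V0: "0 \<in> V" and Vadd: "\<And>x y. x\<in>V \<Longrightarrow> y\<in>V \<Longrightarrow> x+y \<in> V"
    and Vsmc: "\<And>c x. x\<in>V \<Longrightarrow> smc c x \<in> V" and v: "v \<notin> V"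
  shows "\<exists>\<psi>. cbounded_linear_functional smc \<psi> \<and> (\<forall>x\<in>V. \<psi> x = 0) \<and> \<psi> v = 1"
proof -
  note smc = smc_add[OF cas] smc_add_left[OF cas] smc_smc[OF cas] smc_one[OF cas] smc_real[OF cas]
    norm_smc[OF cas] smc_zero_left[OF cas] smc_zero_right[OF cas] smc_minus[OF cas] smc_diff[OF cas]
    smc_minus_left[OF cas] smc_scaleR[OF cas]
  have Vdiff: "x - y \<in> V" if "x \<in> V" "y \<in> V" for x y
  proof -
    have "smc (-1) y = - y" using smc(11)[of 1 y] smc(4)[of y] by simp
    then show ?thesis using Vadd[OF that(1) Vsmc[OF that(2), of "-1"]] by simp
  qed
  define d where "d = infdist v V"
  have d: "d > 0" unfolding d_def using infdist_pos_not_in_closed[OF clV _ v] V0 by blast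
  define W where "W = {w + smc c v | w c. w \<in> V}"
  have uniq: "c = c'" if "w \<in> V" "w' \<in> V" "w + smc c v = w' + smc c' v" for w w' c c'
  proof (rule ccontr)
    assume ne: "c \<noteq> c'"
    have e: "smc c v = smc c' v + smc (c - c') v" using smc(2)[of c' "c - c'" v] by simp
    have "smc (c - c') v = (w + smc c v) - w - smc c' v" using e by (simp add: algebra_simps)
    also have "\<dots> = w' - w" using that(3) by (simp add: algebra_simps)
    finally have "smc (c - c') v = w' - w" .
    then have "smc (1/(c - c')) (smc (c - c') v) = smc (1/(c-c')) (w' - w)" by simp
    then have "v = smc (1/(c-c')) (w' - w)" using ne smc(3) smc(4) by simp
    moreover have "smc (1/(c-c')) (w' - w) \<in> V" using Vsmc[OF Vdiff[OF that(2) that(1)]] .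
    ultimately show False using v by simp
  qed
  define f where "f y = Re (SOME c. \<exists>w\<in>V. y = w + smc c v)" for y
  have feq: "f (w + smc c v) = Re c" if "w \<in> V" for w c
  proof -
    have ex: "\<exists>c'. \<exists>w'\<in>V. w + smc c v = w' + smc c' v" using that by blast
    obtain w' where "w' \<in> V" "w + smc c v = w' + smc (SOME c'. \<exists>w'\<in>V. w + smc c v = w' + smc c' v) v"
      using someI_ex[OF ex] by blast
    then have "(SOME c'. \<exists>w'\<in>V. w + smc c v = w' + smc c' v) = c" using uniq[OF that] by (metis (no_types))
    then show ?thesis unfolding f_def by simp
  qed
  have sc_eq: "r *\<^sub>R (w + smc c v) = smc (of_real r) w + smc (of_real r * c) v" for r w c
  proof -
    have "r *\<^sub>R (w + smc c v) = smc (of_real r) (w + smc c v)" by (simp add: smc(5))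
    also have "\<dots> = smc (of_real r) w + smc (of_real r) (smc c v)" by (rule smc(1))
    also have "\<dots> = smc (of_real r) w + smc (of_real r * c) v" by (simp add: smc(3))
    finally show ?thesis .
  qed
  have Wsub: "subspace W"
    unfolding subspace_def W_def
  proof (intro conjI ballI allI)
    show "0 \<in> {w + smc c v |w c. w \<in> V}" using V0 smc(7)[of v] by force
  next
    fix x y assume "x \<in> {w + smc c v |w c. w \<in> V}" "y \<in> {w + smc c v |w c. w \<in> V}"
    then obtain w c w' c' where "w\<in>V" "x = w + smc c v" "w'\<in>V" "y = w' + smc c' v" by blast
    then have "x + y = (w + w') + smc (c + c') v" "w + w' \<in> V" using smc(2) Vadd by (auto simp: algebra_simps)
    then show "x + y \<in> {w + smc c v |w c. w \<in> V}" by blast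
  next
    fix r x assume "x \<in> {w + smc c v |w c. w \<in> V}"
    then obtain w c where "w\<in>V" "x = w + smc c v" by blast
    then have "r *\<^sub>R x = smc (of_real r) w + smc (of_real r * c) v" "smc (of_real r) w \<in> V"
      using sc_eq Vsmc by auto
    then show "r *\<^sub>R x \<in> {w + smc c v |w c. w \<in> V}" by blast
  qed
  have fadd: "f (x + y) = f x + f y" if "x \<in> W" "y \<in> W" for x y
  proof -
    obtain w c w' c' where "w\<in>V" "x = w + smc c v" "w'\<in>V" "y = w' + smc c' v"
      using \<open>x \<in> W\<close> \<open>y \<in> W\<close> unfolding W_def by blast
    then have "x + y = (w + w') + smc (c + c') v" "w + w' \<in> V" using smc(2) Vadd by (auto simp: algebra_simps)
    then have "f (x + y) = Re (c + c')" using feq by simp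
    then show ?thesis using feq \<open>x = _\<close> \<open>y = _\<close> \<open>w\<in>V\<close> \<open>w'\<in>V\<close> by simp
  qed
  have fscale: "f (r *\<^sub>R x) = r * f x" if "x \<in> W" for x r
  proof -
    obtain w c where "w\<in>V" "x = w + smc c v"
      using \<open>x \<in> W\<close> unfolding W_def by blast
    then have "r *\<^sub>R x = smc (of_real r) w + smc (of_real r * c) v" "smc (of_real r) w \<in> V"
      using sc_eq Vsmc by auto
    then show ?thesis using feq \<open>x = _\<close> \<open>w\<in>V\<close> by simp
  qed
  have fbound: "f x \<le> (1/d) * norm x" if "x \<in> W" for x
  proof -
    obtain w c where wc: "w\<in>V" "x = w + smc c v"
      using \<open>x \<in> W\<close> unfolding W_def by blast
    have "cmod c * d \<le> norm x"
    proof (cases "c = 0")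
      case True then show ?thesis by simp
    next
      case False
      have "- smc (1/c) w \<in> V" using Vsmc[OF wc(1)] Vdiff V0 by (metis diff_0)
      then have "d \<le> dist v (- smc (1/c) w)" unfolding d_def by (rule infdist_le)
      also have "dist v (- smc (1/c) w) = norm (smc (1/c) x)"
        using wc False smc(1,3,4) by (simp add: dist_norm algebra_simps)
      also have "\<dots> = norm x / cmod c" using smc(6) by (simp add: norm_divide)
      finally show ?thesis using False by (simp add: field_simps)
    qed
    then have "cmod c \<le> norm x / d" using d by (simp add: field_simps)
    then show ?thesis using feq[OF wc(1)] wc abs_Re_le_cmod[of c] by simp
  qed
  obtain g where g: "linear g" "\<And>x. x\<in>W \<Longrightarrow> g x = f x" "\<And>x. g x \<le> (1/d) * norm x"
    using real_HB[OF Wsub fadd fscale fbound] d by force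
  have gabs: "\<bar>g x\<bar> \<le> (1/d) * norm x" for x
    using g(3)[of x] g(3)[of "-x"] linear_neg[OF g(1), of x] by simp
  define \<psi> where "\<psi> x = complex_of_real (g x) - \<i> * complex_of_real (g (smc \<i> x))" for x
  have gadd: "g (x + y) = g x + g y" for x y using g(1) by (simp add: linear_add)
  have gsc: "g (r *\<^sub>R x) = r * g x" for r x using g(1) by (simp add: linear_scale)
  have gdiff: "g (x - y) = g x - g y" for x y by (metis gadd diff_add_cancel eq_diff_eq)
  have gneg: "g (- x) = - g x" for x using gdiff[of 0 x] gdiff[of 0 0] by simp
  have smc_dec: "smc c x = Re c *\<^sub>R x + smc \<i> (Im c *\<^sub>R x)" for c x
  proof -
    have "c = complex_of_real (Re c) + \<i> * complex_of_real (Im c)" by (simp add: complex_eq_iff)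
    then have "smc c x = smc (complex_of_real (Re c)) x + smc (\<i> * complex_of_real (Im c)) x"
      using smc(2) by metis
    then show ?thesis using smc(3,5) by metis
  qed
  have ii: "smc \<i> (smc \<i> x) = - x" for x
  proof -
    have "smc \<i> (smc \<i> x) = smc (- 1) x" using smc(3) by simp
    also have "\<dots> = - x" using smc(11)[of 1 x] smc(4) by simp
    finally show ?thesis .
  qed
  have "cbounded_linear_functional smc \<psi>"
    unfolding cbounded_linear_functional_def
  proof (intro conjI allI)
    fix x y show "\<psi> (x + y) = \<psi> x + \<psi> y" unfolding \<psi>_def using smc(1) gadd by (simp add: algebra_simps)
  next
    fix c x
    have "\<psi> (smc c x) = complex_of_real (Re c * g x + Im c * g (smc \<i> x))
        - \<i> * complex_of_real (Re c * g (smc \<i> x) - Im c * g x)"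
    proof -
      have e1: "g (smc c x) = Re c * g x + Im c * g (smc \<i> x)"
        unfolding smc_dec[of c x] gadd gsc smc(12) by simp
      have "smc \<i> (smc c x) = Re c *\<^sub>R smc \<i> x + smc \<i> (smc \<i> (Im c *\<^sub>R x))"
        unfolding smc_dec[of c x] smc(1) smc(12) ..
      also have "\<dots> = Re c *\<^sub>R smc \<i> x + (- (Im c *\<^sub>R x))" unfolding ii ..
      finally have e2': "smc \<i> (smc c x) = Re c *\<^sub>R smc \<i> x + (- (Im c *\<^sub>R x))" .
      have e2: "g (smc \<i> (smc c x)) = Re c * g (smc \<i> x) - Im c * g x"
        unfolding e2' gadd gneg gsc by simp
      show ?thesis unfolding \<psi>_def e1 e2 ..
    qed
    also have "\<dots> = c * \<psi> x" unfolding \<psi>_def by (simp add: complex_eq_iff algebra_simps)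
    finally show "\<psi> (smc c x) = c * \<psi> x" .
  next
    show "\<exists>K. \<forall>x. cmod (\<psi> x) \<le> K * norm x"
    proof (intro exI allI)
      fix x
      have "cmod (\<psi> x) \<le> \<bar>g x\<bar> + \<bar>g (smc \<i> x)\<bar>"
        unfolding \<psi>_def using norm_triangle_ineq4[of "complex_of_real (g x)" "\<i> * complex_of_real (g (smc \<i> x))"]
        by (simp add: norm_mult)
      also have "\<dots> \<le> (1/d) * norm x + (1/d) * norm x" using gabs[of x] gabs[of "smc \<i> x"] smc(6) by simp
      finally show "cmod (\<psi> x) \<le> (2/d) * norm x" by simp
    qed
  qed
  have gV: "g (w + smc c v) = Re c" if "w \<in> V" for w c
  proof -
    have "w + smc c v \<in> W" unfolding W_def using that by blast
    then show ?thesis using g(2) feq[OF that] by simp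
  qed
  moreover have "\<forall>x\<in>V. \<psi> x = 0"
  proof
    fix x assume x: "x \<in> V"
    have 1: "g x = 0" using gV[OF x, of 0] smc(7)[of v] by simp
    have 2: "g (smc \<i> x) = 0" using gV[OF Vsmc[OF x, of \<i>], of 0] smc(7)[of v] by simp
    show "\<psi> x = 0" unfolding \<psi>_def 1 2 by simp
  qed
  moreover have "\<psi> v = 1"
  proof -
    have 1: "g v = 1" using gV[OF V0, of 1] smc(4)[of v] by simp
    have 2: "g (smc \<i> v) = 0" using gV[OF V0, of \<i>] by simp
    show ?thesis unfolding \<psi>_def 1 2 by simp
  qed
  ultimately show ?thesis using \<open>cbounded_linear_functional smc \<psi>\<close> by blast
qed

end



lemma qi_compose:
  fixes b y e q :: "'a::comm_ring"
  assumes "b + y - b*y = e" "e + q - e*q = 0"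
  shows "b + (y + q - y*q) - b*(y + q - y*q) = 0"
proof -
  have "b + (y + q - y*q) - b*(y + q - y*q) = (b + y - b*y) + q - q*(b + y - b*y)"
    by (simp add: algebra_simps)
  also have "\<dots> = 0" using assms by (simp add: mult.commute)
  finally show ?thesis .
qed

lemma qi_resolvent:
  fixes A B p q :: "'a::comm_ring"
  assumes hA: "A + p - A*p = 0" and hB: "B + q - B*q = 0"
  shows "q - p = (A - B) - p*(A - B) - (A - B)*q + p*(A - B)*q"
proof -
  have 1: "A*p = A + p" "p*A = A + p" using hA by (simp_all add: algebra_simps mult.commute)
  have 2: "B*q = B + q" using hB by (simp add: algebra_simps)
  have "(A - B) - p*(A - B) - (A - B)*q + p*(A - B)*q
      = A - B - p*A + p*B - A*q + B*q + (p*A)*q - p*(B*q)"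
    by (simp add: algebra_simps)
  also have "\<dots> = q - p" unfolding 1 2 by (simp add: algebra_simps)
  finally show ?thesis by simp
qed

lemma qi_square_diff:
  fixes c p p' :: "'a::comm_ring"
  assumes h1: "c + p - c*p = 0" and h2: "- c + p' + c*p' = 0"
  shows "c*c*(p + p') = (c*c + c*c) + (p + p')"
    and "c + c = (p' - p) - c*c*(p' - p)"
proof -
  have a: "c*p = c + p" using h1 by (simp add: algebra_simps)
  have b: "c*p' = c - p'" using h2 by (simp add: algebra_simps)
  have ap: "c*c*p = c*c + c + p" by (simp add: mult.assoc a algebra_simps)
  have bp: "c*c*p' = c*c - c + p'" by (simp add: mult.assoc b algebra_simps)
  show "c*c*(p + p') = (c*c + c*c) + (p + p')" by (simp add: distrib_left ap bp)
  show "c + c = (p' - p) - c*c*(p' - p)" by (simp add: right_diff_distrib ap bp)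
qed

lemma qi_square:
  fixes c p p' :: "'a::{comm_ring, real_algebra}"
  assumes h1: "c + p - c*p = 0" and h2: "- c + p' + c*p' = 0"
  shows "c*c + (1/2) *\<^sub>R (p + p') - c*c*((1/2) *\<^sub>R (p + p')) = 0"
proof -
  have "c*c*((1/2) *\<^sub>R (p + p')) = (1/2) *\<^sub>R ((c*c + c*c) + (p + p'))"
    using qi_square_diff(1)[OF h1 h2] by (simp add: mult_scaleR_right)
  also have "\<dots> = c*c + (1/2) *\<^sub>R (p + p')"
    by (simp add: scaleR_add_right scaleR_add_left[symmetric])
  finally show ?thesis by simp
qed

fun ep :: "'a::times \<Rightarrow> nat \<Rightarrow> 'a" where
  "ep e 0 = e" | "ep e (Suc j) = e * ep e j"

lemma norm_ep: "norm (ep (e::'a::real_normed_algebra) j) \<le> norm e ^ Suc j"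
proof (induction j)
  case 0 then show ?case by simp
next
  case (Suc j)
  have "norm (ep e (Suc j)) \<le> norm e * norm (ep e j)" by (simp add: norm_mult_ineq)
  also have "\<dots> \<le> norm e * norm e ^ Suc j" using Suc by (simp add: mult_left_mono)
  finally show ?case by simp
qed

lemma neumann_qi:
  fixes e :: "'a::{banach, real_normed_algebra, comm_ring}"
  assumes "norm e < 1"
  shows "\<exists>q. e + q - e*q = 0"
proof -
  have sg: "summable (\<lambda>j. norm e ^ Suc j)"
    using assms by (simp add: summable_geometric)
  have sm: "summable (ep e)"
    by (rule summable_comparison_test'[OF sg, of 0]) (use norm_ep in blast)
  define s where "s = suminf (ep e)"
  have "e * s = (\<Sum>j. e * ep e j)" unfolding s_def using suminf_mult[OF sm] by simp
  also have "\<dots> = (\<Sum>j. ep e (Suc j))" by simp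
  also have "\<dots> = s - e" unfolding s_def using suminf_split_head[OF sm] by simp
  finally have "e * s = s - e" .
  then have "e + (- s) - e * (- s) = 0" by simp
  then show ?thesis by blast
qed

definition zeta :: "nat \<Rightarrow> complex" where "zeta k = exp (\<i> * of_real pi / of_nat (2^k))"
lemma zeta_pow: "zeta k ^ (2^k) = -1"
  unfolding zeta_def by (subst exp_divide_power_eq) (simp_all add: exp_pi_i')
lemma norm_zeta: "cmod (zeta k) = 1"
  unfolding zeta_def by (simp add: norm_exp_eq_Re)
lemma zeta_lim: "zeta \<longlonglongrightarrow> 1"
proof -
  have "(\<lambda>k. \<i> * of_real pi / of_nat (2^k)) \<longlonglongrightarrow> (0::complex)"
  proof -
    have "(\<lambda>k. (1/2::real)^k) \<longlonglongrightarrow> 0" by (rule LIMSEQ_power_zero) simp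
    then have lim: "(\<lambda>k. \<i> * complex_of_real (pi * (1/2)^k)) \<longlonglongrightarrow> \<i> * complex_of_real (pi * 0)"
      by (intro tendsto_mult_left tendsto_of_real)
    have eq: "\<i> * complex_of_real (pi * (1/2)^k) = \<i> * of_real pi / of_nat (2^k)" for k
      by (simp add: power_divide)
    show ?thesis using lim unfolding eq by simp
  qed
  then have "(\<lambda>k. exp (\<i> * of_real pi / of_nat (2^k))) \<longlonglongrightarrow> exp 0"
    by (intro tendsto_intros)
  then show ?thesis unfolding zeta_def by simp
qed

fun sq :: "'a::times \<Rightarrow> nat \<Rightarrow> 'a" where
  "sq a 0 = a" | "sq a (Suc k) = sq a k * sq a k"

fun Gf :: "(complex \<Rightarrow> 'a::real_vector) \<Rightarrow> nat \<Rightarrow> complex \<Rightarrow> 'a" where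
  "Gf Q 0 \<mu> = Q \<mu>"
| "Gf Q (Suc k) \<mu> = (1/2) *\<^sub>R (Gf Q k \<mu> + Gf Q k (\<mu> * zeta k))"

lemma norm_res_bound:
  fixes X p q :: "'a::real_normed_algebra"
  shows "norm (X - p*X - X*q + p*X*q) \<le> norm X * (1 + norm p) * (1 + norm q)"
proof -
  have a: "norm (X - p*X - X*q + p*X*q) \<le> norm (X - p*X - X*q) + norm (p*X*q)"
    by (rule norm_triangle_ineq)
  have b: "norm (X - p*X - X*q) \<le> norm (X - p*X) + norm (X*q)" by (rule norm_triangle_ineq4)
  have c: "norm (X - p*X) \<le> norm X + norm (p*X)" by (rule norm_triangle_ineq4)
  have d: "norm (p*X) \<le> norm p * norm X" by (rule norm_mult_ineq)
  have e: "norm (X*q) \<le> norm X * norm q" by (rule norm_mult_ineq)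
  have f: "norm (p*X*q) \<le> norm (p*X) * norm q" by (rule norm_mult_ineq)
  have g: "norm (p*X) * norm q \<le> norm p * norm X * norm q" using d by (simp add: mult_right_mono)
  have "norm (X - p*X - X*q + p*X*q) \<le> norm X + norm p * norm X + norm X * norm q + norm p * norm X * norm q"
    using a b c d e f g by linarith
  also have "\<dots> = norm X * (1 + norm p) * (1 + norm q)" by (simp add: algebra_simps)
  finally show ?thesis .
qed

context
  fixes smc :: "complex \<Rightarrow> 'a::{banach, real_normed_algebra, comm_ring} \<Rightarrow> 'a"
  assumes cas: "complex_algebra_scaling smc"
begin

lemma spectral:
  fixes a :: 'a
  assumes hq: "\<And>\<mu>. cmod \<mu> \<le> 1 \<Longrightarrow> \<exists>q. smc \<mu> a + q - smc \<mu> a * q = 0"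
  shows "\<exists>k. norm (sq a k) \<le> 1"
proof -
  note smc = smc_add[OF cas] smc_add_left[OF cas] smc_smc[OF cas] smc_one[OF cas] smc_real[OF cas]
    norm_smc[OF cas] smc_zero_left[OF cas] smc_zero_right[OF cas] smc_minus[OF cas] smc_diff[OF cas]
    smc_minus_left[OF cas] smc_scaleR[OF cas] smc_mult_left[OF cas] smc_mult_right[OF cas]
  define D where "D = cball (0::complex) 1"
  define Q where "Q \<mu> = (SOME q. smc \<mu> a + q - smc \<mu> a * q = 0)" for \<mu>
  have Qp: "smc \<mu> a + Q \<mu> - smc \<mu> a * Q \<mu> = 0" if "cmod \<mu> \<le> 1" for \<mu>
    unfolding Q_def using someI_ex[OF hq[OF that]] .
  have cont: "continuous_on D Q"
    unfolding continuous_on_iff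
  proof (intro ballI allI impI)
    fix \<mu> :: complex and \<epsilon> :: real assume \<mu>: "\<mu> \<in> D" and \<epsilon>: "\<epsilon> > 0"
    define m where "m = norm (Q \<mu>)"
    define C where "C = norm a * (1 + m)"
    have C0: "C \<ge> 0" and m0: "m \<ge> 0" unfolding C_def m_def by auto
    define \<delta> where "\<delta> = min (1/(2*C+1)) (\<epsilon>/(2*C*(1+m)+1))"
    have \<delta>0: "\<delta> > 0" unfolding \<delta>_def using C0 m0 \<epsilon> by (simp add: add_nonneg_pos)
    show "\<exists>d>0. \<forall>\<nu>\<in>D. dist \<nu> \<mu> < d \<longrightarrow> dist (Q \<nu>) (Q \<mu>) < \<epsilon>"
    proof (intro exI conjI ballI impI, fact \<delta>0)
      fix \<nu> assume \<nu>: "\<nu> \<in> D" and d: "dist \<nu> \<mu> < \<delta>"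
      define h where "h = cmod (\<mu> - \<nu>)"
      have h: "h < \<delta>" "h \<ge> 0" using d unfolding h_def by (simp_all add: dist_norm norm_minus_commute)
      define \<Delta> where "\<Delta> = Q \<nu> - Q \<mu>"
      have res: "Q \<nu> - Q \<mu> = (smc \<mu> a - smc \<nu> a) - Q \<mu>*(smc \<mu> a - smc \<nu> a)
          - (smc \<mu> a - smc \<nu> a)*Q \<nu> + Q \<mu>*(smc \<mu> a - smc \<nu> a)*Q \<nu>"
        by (rule qi_resolvent[OF Qp Qp]) (use \<mu> \<nu> in \<open>auto simp: D_def\<close>)
      have AB: "norm (smc \<mu> a - smc \<nu> a) = h * norm a"
      proof -
        have "smc \<mu> a - smc \<nu> a = smc (\<mu> - \<nu>) a"
          using smc(2)[of \<nu> "\<mu> - \<nu>" a] by simp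
        then show ?thesis using smc(6) h_def by simp
      qed
      have nq: "norm (Q \<nu>) \<le> m + norm \<Delta>"
        unfolding m_def \<Delta>_def using norm_triangle_ineq[of "Q \<mu>" "Q \<nu> - Q \<mu>"] by simp
      have "norm \<Delta> \<le> h * norm a * (1 + m) * (1 + norm (Q \<nu>))"
        unfolding \<Delta>_def res using norm_res_bound[of "smc \<mu> a - smc \<nu> a" "Q \<mu>" "Q \<nu>"] AB m_def by simp
      also have "\<dots> \<le> (h * norm a * (1 + m)) * (1 + m + norm \<Delta>)"
        by (rule mult_left_mono) (use nq h(2) m0 in auto)
      also have "\<dots> = h * C * (1 + m + norm \<Delta>)" unfolding C_def by simp
      finally have 1: "norm \<Delta> \<le> h * C * (1 + m) + h * C * norm \<Delta>" by (simp add: algebra_simps)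
      have hC: "h * C \<le> 1/2"
      proof -
        have "h * C \<le> \<delta> * C" using h C0 by (simp add: mult_right_mono)
        also have "\<dots> \<le> (1/(2*C+1)) * C" using C0 unfolding \<delta>_def
          by (intro mult_right_mono) auto
        also have "\<dots> = C / (2*C+1)" by simp
        also have "\<dots> \<le> 1/2" using C0 by (simp add: field_simps)
        finally show ?thesis .
      qed
      have "norm \<Delta> \<le> 2 * h * C * (1 + m)"
      proof -
        have "h * C * norm \<Delta> \<le> (1/2) * norm \<Delta>" by (rule mult_right_mono[OF hC]) simp
        then show ?thesis using 1 by simp
      qed
      also have "\<dots> < \<epsilon>"
      proof (cases "C * (1 + m) = 0")
        case True
        have "2 * h * C * (1 + m) = 2 * h * (C * (1 + m))" by (simp only: mult.assoc)
        also have "\<dots> = 0" by (simp only: True mult_zero_right)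
        finally have "2 * h * C * (1 + m) = 0" .
        then show ?thesis using \<epsilon> by linarith
      next
        case False
        then have pos: "C * (1 + m) > 0" using C0 m0 by (simp add: less_le)
        have "2 * h * C * (1 + m) < 2 * \<delta> * (C * (1 + m))" using mult_strict_right_mono[OF h(1) pos] by (simp add: mult.assoc)
        also have "\<dots> \<le> 2 * (\<epsilon>/(2*C*(1+m)+1)) * (C * (1 + m))"
          using pos unfolding \<delta>_def by (intro mult_right_mono mult_left_mono) auto
        also have "\<dots> < \<epsilon>" using pos \<epsilon> by (simp add: field_simps)
        finally show ?thesis .
      qed
      finally show "dist (Q \<nu>) (Q \<mu>) < \<epsilon>" unfolding dist_norm \<Delta>_def .
    qed
  qed
  have "uniformly_continuous_on D Q"
    by (rule compact_uniformly_continuous[OF cont]) (simp add: D_def)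
  then obtain \<delta> where \<delta>0: "\<delta> > 0"
    and \<delta>: "\<And>\<mu> \<nu>. \<mu> \<in> D \<Longrightarrow> \<nu> \<in> D \<Longrightarrow> dist \<nu> \<mu> < \<delta> \<Longrightarrow> dist (Q \<nu>) (Q \<mu>) < 1/2"
    unfolding uniformly_continuous_on_def by (metis less_divide_eq_numeral1(1) mult_eq_0_iff zero_less_one)
  define G where "G = Gf Q"
  have inD: "\<mu> * zeta k \<in> D" if "\<mu> \<in> D" for \<mu> k
    using that by (simp add: D_def norm_mult norm_zeta)
  have negpow: "smc ((\<mu> * zeta k) ^ (2^k)) s = - smc (\<mu> ^ (2^k)) s" for \<mu> k s
  proof -
    have "(\<mu> * zeta k) ^ (2^k) = - (\<mu> ^ (2^k))" by (simp add: power_mult_distrib zeta_pow)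
    then show ?thesis using smc(11) by simp
  qed
  have inv1: "\<forall>\<mu>\<in>D. smc (\<mu>^(2^k)) (sq a k) + G k \<mu> - smc (\<mu>^(2^k)) (sq a k) * G k \<mu> = 0" for k
  proof (induction k)
    case 0
    show ?case using Qp by (simp add: G_def D_def)
  next
    case (Suc k)
    show ?case
    proof
      fix \<mu> assume \<mu>: "\<mu> \<in> D"
      define c where "c = smc (\<mu>^(2^k)) (sq a k)"
      have h1: "c + G k \<mu> - c * G k \<mu> = 0" using Suc \<mu> unfolding c_def by blast
      have "smc ((\<mu> * zeta k)^(2^k)) (sq a k) + G k (\<mu> * zeta k)
           - smc ((\<mu> * zeta k)^(2^k)) (sq a k) * G k (\<mu> * zeta k) = 0"
        using Suc inD[OF \<mu>] by blast
      then have h2: "- c + G k (\<mu> * zeta k) + c * G k (\<mu> * zeta k) = 0"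
        unfolding negpow c_def by simp
      have cc: "c * c = smc (\<mu>^(2^Suc k)) (sq a (Suc k))"
      proof -
        have "c * c = smc (\<mu>^(2^k)) (smc (\<mu>^(2^k)) (sq a k * sq a k))"
          unfolding c_def smc(13) smc(14) ..
        also have "\<dots> = smc (\<mu>^(2^k) * \<mu>^(2^k)) (sq a k * sq a k)" by (simp add: smc(3))
        also have "\<mu>^(2^k) * \<mu>^(2^k) = \<mu>^(2^Suc k)" by (simp add: power_add[symmetric] mult_2)
        finally show ?thesis by simp
      qed
      have "G (Suc k) \<mu> = (1/2) *\<^sub>R (G k \<mu> + G k (\<mu> * zeta k))" by (simp add: G_def)
      then show "smc (\<mu>^(2^Suc k)) (sq a (Suc k)) + G (Suc k) \<mu>
          - smc (\<mu>^(2^Suc k)) (sq a (Suc k)) * G (Suc k) \<mu> = 0"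
        using qi_square[OF h1 h2] cc by simp
    qed
  qed
  have inv2: "\<forall>\<mu>\<in>D. \<forall>\<nu>\<in>D. dist \<nu> \<mu> < \<delta> \<longrightarrow> dist (G k \<nu>) (G k \<mu>) < 1/2" for k
  proof (induction k)
    case 0 show ?case using \<delta> by (simp add: G_def)
  next
    case (Suc k)
    show ?case
    proof (intro ballI impI)
      fix \<mu> \<nu> assume \<mu>: "\<mu> \<in> D" and \<nu>: "\<nu> \<in> D" and d: "dist \<nu> \<mu> < \<delta>"
      have d2: "dist (\<nu> * zeta k) (\<mu> * zeta k) < \<delta>"
        using d by (simp add: dist_norm left_diff_distrib[symmetric] norm_mult norm_zeta)
      have a1: "dist (G k \<nu>) (G k \<mu>) < 1/2" using Suc \<mu> \<nu> d by blast
      have a2: "dist (G k (\<nu> * zeta k)) (G k (\<mu> * zeta k)) < 1/2"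
        using Suc inD[OF \<mu>] inD[OF \<nu>] d2 by blast
      have "G (Suc k) \<nu> - G (Suc k) \<mu>
          = (1/2) *\<^sub>R ((G k \<nu> - G k \<mu>) + (G k (\<nu> * zeta k) - G k (\<mu> * zeta k)))"
        by (simp add: G_def algebra_simps)
      then have "dist (G (Suc k) \<nu>) (G (Suc k) \<mu>)
          \<le> (1/2) * (dist (G k \<nu>) (G k \<mu>) + dist (G k (\<nu> * zeta k)) (G k (\<mu> * zeta k)))"
        unfolding dist_norm using norm_triangle_ineq by simp
      also have "\<dots> < 1/2" using a1 a2 by simp
      finally show "dist (G (Suc k) \<nu>) (G (Suc k) \<mu>) < 1/2" .
    qed
  qed
  obtain k where k: "dist (zeta k) 1 < \<delta>"
    using zeta_lim[unfolded LIMSEQ_def] \<delta>0 by blast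
  show ?thesis
  proof (rule exI[of _ k], rule ccontr)
    assume "\<not> norm (sq a k) \<le> 1"
    then have big: "norm (sq a k) > 1" by simp
    define M where "M = (2::nat)^k"
    have M0: "M > 0" unfolding M_def by simp
    define r where "r = norm (sq a k) powr (- 1 / real M)"
    have nz: "sq a k \<noteq> 0" using big by (cases "sq a k = 0") auto
    have r0: "r > 0" unfolding r_def using nz by simp
    have r1: "r \<le> 1"
    proof -
      have "r \<le> norm (sq a k) powr 0" unfolding r_def
        by (rule powr_mono) (use big M0 in auto)
      then show ?thesis using nz by simp
    qed
    have rM: "r ^ M * norm (sq a k) = 1"
    proof -
      have "r ^ M = r powr (real M)" using r0 by (simp add: powr_realpow)
      also have "\<dots> = norm (sq a k) powr (- 1 / real M * real M)" unfolding r_def by (simp add: powr_powr)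
      also have "\<dots> = norm (sq a k) powr (-1)" using M0 by simp
      also have "\<dots> = inverse (norm (sq a k))" using big by (simp add: powr_minus)
      finally show ?thesis using nz by simp
    qed
    define \<mu> where "\<mu> = complex_of_real r"
    have \<mu>D: "\<mu> \<in> D" unfolding \<mu>_def D_def using r0 r1 by simp
    define c where "c = smc (\<mu>^M) (sq a k)"
    have nc: "norm c = 1" unfolding c_def using smc(6) rM r0 by (simp add: \<mu>_def norm_power)
    define p where "p = G k \<mu>"
    define p' where "p' = G k (\<mu> * zeta k)"
    have h1: "c + p - c * p = 0" using inv1[of k] \<mu>D unfolding c_def p_def M_def by blast
    have "smc ((\<mu> * zeta k)^(2^k)) (sq a k) + G k (\<mu> * zeta k)
           - smc ((\<mu> * zeta k)^(2^k)) (sq a k) * G k (\<mu> * zeta k) = 0"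
      using inv1[of k] inD[OF \<mu>D] by blast
    then have h2: "- c + p' + c * p' = 0" unfolding negpow c_def p'_def M_def by simp
    have dp: "norm (p' - p) < 1/2"
    proof -
      have "dist (\<mu> * zeta k) \<mu> = cmod \<mu> * dist (zeta k) 1"
        by (simp add: dist_norm norm_mult[symmetric] algebra_simps)
      also have "\<dots> \<le> dist (zeta k) 1" using \<mu>D by (simp add: D_def mult_left_le_one_le)
      finally have "dist (\<mu> * zeta k) \<mu> < \<delta>" using k by simp
      then show ?thesis using \<delta> inv2[of k] \<mu>D inD[OF \<mu>D] unfolding p_def p'_def dist_norm by blast
    qed
    have eq: "c + c = (p' - p) - c*c*(p' - p)" by (rule qi_square_diff(2)[OF h1 h2])
    have "2 = norm (c + c)" using nc by (simp flip: mult_2 scaleR_2)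
    also have "\<dots> \<le> norm (p' - p) + norm (c*c*(p' - p))" unfolding eq by (rule norm_triangle_ineq4)
    also have "norm (c*c*(p' - p)) \<le> norm (p' - p)"
    proof -
      have "norm (c*c*(p' - p)) \<le> norm (c*c) * norm (p' - p)" by (rule norm_mult_ineq)
      also have "norm (c*c) \<le> 1" using norm_mult_ineq[of c c] nc by simp
      then have "norm (c*c) * norm (p' - p) \<le> 1 * norm (p' - p)" by (intro mult_right_mono) auto
      finally show ?thesis by simp
    qed
    finally show False using dp by simp
  qed
qed
end




lemma closure_add_closed:
  fixes S :: "'a::real_normed_vector set"
  assumes S: "\<And>x y. x\<in>S \<Longrightarrow> y\<in>S \<Longrightarrow> x+y\<in>S" and x: "x \<in> closure S" and y: "y \<in> closure S"
  shows "x + y \<in> closure S"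
proof -
  have 1: "w + z \<in> closure S" if "z \<in> S" "w \<in> closure S" for z w
  proof -
    have "(\<lambda>w. w + z) ` closure S \<subseteq> closure S"
      by (rule image_closure_subset) (use S that closure_subset in \<open>auto intro!: continuous_intros\<close>)
    then show ?thesis using that by blast
  qed
  have "(\<lambda>w. x + w) ` closure S \<subseteq> closure S"
    by (rule image_closure_subset) (use 1 x in \<open>auto intro!: continuous_intros\<close>)
  then show ?thesis using y by blast
qed

lemma funpow_sq: "((\<lambda>b. a*b)^^(2^k)) y = sq a k * (y::'a::comm_ring)"
proof (induction k arbitrary: y)
  case 0 then show ?case by simp
next
  case (Suc k)
  have "((\<lambda>b. a*b)^^(2^Suc k)) y = ((\<lambda>b. a*b)^^(2^k)) (((\<lambda>b. a*b)^^(2^k)) y)"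
    by (simp add: mult_2 funpow_add)
  also have "\<dots> = sq a (Suc k) * y" using Suc by (simp add: mult.assoc)
  finally show ?case .
qed

lemma cblf_add:
  assumes "cbounded_linear_functional smc f"
  shows "f (x + y) = f x + f y" "f 0 = 0" "f (x - y) = f x - f y"
proof -
  show a: "f (x + y) = f x + f y" for x y using assms unfolding cbounded_linear_functional_def by blast
  show z: "f 0 = 0" using a[of 0 0] by simp
  show "f (x - y) = f x - f y" using a[of "x - y" y] by simp
qed

theorem proposition3p2:
  fixes smc :: "complex \<Rightarrow> 'a::{banach, real_normed_algebra, comm_ring} \<Rightarrow> 'a"
    and a :: 'a
  assumes "complex_algebra_scaling smc"
    and "\<exists>x::'a. x \<noteq> 0"
  shows "\<not> weakly_hypercyclic smc (\<lambda>b. a * b)"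
proof
  note cas = assms(1)
  note smc = smc_add[OF cas] smc_add_left[OF cas] smc_smc[OF cas] smc_one[OF cas] smc_real[OF cas]
    norm_smc[OF cas] smc_zero_left[OF cas] smc_zero_right[OF cas] smc_minus[OF cas] smc_diff[OF cas]
    smc_minus_left[OF cas] smc_scaleR[OF cas] smc_mult_left[OF cas] smc_mult_right[OF cas]
  assume "weakly_hypercyclic smc (\<lambda>b. a * b)"
  then obtain x where wd: "weakly_dense smc {((\<lambda>b. a * b)^^n) x | n. True}"
    unfolding weakly_hypercyclic_def by blast
  define Orb where "Orb n = ((\<lambda>b. a * b)^^n) x" for n
  have wdO: "\<exists>n. \<forall>f\<in>F. cmod (f (Orb n) - f y) < e"
    if "finite F" "\<forall>f\<in>F. cbounded_linear_functional smc f" "e > 0" for y F e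
    using wd that unfolding weakly_dense_def Orb_def by blast
  have OSuc: "Orb (Suc n) = a * Orb n" for n unfolding Orb_def by simp
  show False
  proof (cases "\<forall>\<mu>. cmod \<mu> \<le> 1 \<longrightarrow> (\<exists>q. smc \<mu> a + q - smc \<mu> a * q = 0)")
    case True
    obtain k where k: "norm (sq a k) \<le> 1" using spectral[OF cas] True by blast
    define M where "M = (2::nat)^k"
    have M0: "M > 0" unfolding M_def by simp
    define B where "B = Max ((\<lambda>n. norm (Orb n)) ` {..<M})"
    have bound: "norm (Orb n) \<le> B" for n
    proof (induction n rule: less_induct)
      case (less n)
      show ?case
      proof (cases "n < M")
        case True then show ?thesis unfolding B_def by (intro Max_ge) auto
      next
        case False
        have "Orb n = ((\<lambda>b. a * b)^^M) (Orb (n - M))"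
          unfolding Orb_def using False funpow_add[of M "n - M" "(\<lambda>b. a * b)"] by (simp add: comp_def)
        also have "\<dots> = sq a k * Orb (n - M)" unfolding M_def by (rule funpow_sq)
        finally have "norm (Orb n) \<le> norm (sq a k) * norm (Orb (n - M))"
          by (simp add: norm_mult_ineq)
        also have "\<dots> \<le> 1 * B"
          using k less[of "n - M"] False M0 by (intro mult_mono) auto
        finally show ?thesis by simp
      qed
    qed
    have B0: "B \<ge> 0" using bound[of 0] norm_ge_zero[of "Orb 0"] by linarith
    obtain v :: 'a where v: "v \<noteq> 0" using assms(2) by blast
    obtain \<psi> where \<psi>: "cbounded_linear_functional smc \<psi>" "\<psi> v = 1"
      using complex_HB[OF cas, of "{0}" v] v smc(8) by auto
    obtain K where K: "\<And>y. cmod (\<psi> y) \<le> K * norm y"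
      using \<psi>(1) unfolding cbounded_linear_functional_def by blast
    have K0: "K \<ge> 0"
    proof -
      have "1 \<le> K * norm v" using K[of v] \<psi>(2) by simp
      show ?thesis
      proof (rule ccontr)
        assume "\<not> K \<ge> 0"
        then have "K * norm v \<le> 0" using mult_nonpos_nonneg[of K "norm v"] by simp
        then show False using \<open>1 \<le> K * norm v\<close> by simp
      qed
    qed
    define t where "t = K * B + 1"
    have "\<psi> (smc (complex_of_real t) v) = complex_of_real t"
      using \<psi> unfolding cbounded_linear_functional_def by simp
    obtain n where n: "cmod (\<psi> (Orb n) - \<psi> (smc (complex_of_real t) v)) < 1"
      using wdO[of "{\<psi>}" 1 "smc (complex_of_real t) v"] \<psi>(1) by auto
    have "cmod (\<psi> (Orb n)) \<le> K * B"
      using K[of "Orb n"] mult_left_mono[OF bound[of n] K0] by linarith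
    moreover have "cmod (complex_of_real t) - cmod (\<psi> (Orb n)) \<le> cmod (\<psi> (Orb n) - complex_of_real t)"
      using norm_triangle_ineq3[of "complex_of_real t" "\<psi> (Orb n)"] by (simp add: norm_minus_commute)
    moreover have "cmod (complex_of_real t) = t"
    proof -
      have "t \<ge> 0" unfolding t_def using K0 B0 by simp
      then show ?thesis by simp
    qed
    ultimately show False using n \<open>\<psi> (smc (complex_of_real t) v) = complex_of_real t\<close>
      unfolding t_def by simp
  next
    case False
    then obtain \<mu> where \<mu>: "cmod \<mu> \<le> 1" and nq: "\<not> (\<exists>q. smc \<mu> a + q - smc \<mu> a * q = 0)" by blast
    define b where "b = smc \<mu> a"
    define L where "L y = y - b * y" for y
    define V where "V = closure (range L)"
    have "- b \<notin> V"
    proof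
      assume "- b \<in> V"
      then obtain z where "z \<in> range L" "dist z (- b) < 1"
        unfolding V_def closure_approachable by (meson zero_less_one)
      then obtain y where y: "dist (L y) (- b) < 1" by blast
      define e where "e = b + y - b * y"
      have "norm e < 1" using y unfolding e_def L_def dist_norm by (simp add: algebra_simps)
      then obtain q where "e + q - e * q = 0" using neumann_qi by blast
      from qi_compose[OF e_def[symmetric] this] nq show False unfolding b_def by blast
    qed
    have L0: "L 0 = 0" unfolding L_def by simp
    have Ladd: "L y + L z = L (y + z)" for y z unfolding L_def by (simp add: algebra_simps)
    have Lsmc: "smc c (L y) = L (smc c y)" for c y unfolding L_def by (simp add: smc(10) smc(14))
    have V0: "0 \<in> V" unfolding V_def
    proof -
      have "0 \<in> range L" using rangeI[of L 0] L0 by simp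
      then show "0 \<in> closure (range L)" using closure_subset[of "range L"] by (rule subsetD[rotated])
    qed
    have Radd: "p + q \<in> range L" if "p \<in> range L" "q \<in> range L" for p q
      using that by (auto simp: Ladd)
    have Vadd: "y + z \<in> V" if "y \<in> V" "z \<in> V" for y z
    proof -
      have yz: "y \<in> closure (range L)" "z \<in> closure (range L)" using that unfolding V_def by auto
      have "y + z \<in> closure (range L)"
      proof (rule closure_add_closed[of "range L" y z])
        show "p + q \<in> range L" if "p \<in> range L" "q \<in> range L" for p q using Radd[OF that] .
      qed (use yz in auto)
      then show ?thesis unfolding V_def .
    qed
    have Vsmc: "smc c y \<in> V" if "y \<in> V" for c y
    proof -
      have "smc c ` closure (range L) \<subseteq> closure (range L)"
      proof (rule image_closure_subset)
        show "continuous_on (closure (range L)) (smc c)" by (rule continuous_on_smc[OF cas])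
        show "smc c ` range L \<subseteq> closure (range L)"
        proof
          fix z assume "z \<in> smc c ` range L"
          then obtain w where w: "z = smc c (L w)" by (rule imageE) (metis rangeE)
          have "z = L (smc c w)" unfolding w by (rule Lsmc)
          then have "z \<in> range L" by (rule image_eqI) simp
          then show "z \<in> closure (range L)" using closure_subset[of "range L"] by (rule subsetD[rotated])
        qed
      qed simp
      then show ?thesis using that unfolding V_def by blast
    qed
    obtain \<psi> where \<psi>: "cbounded_linear_functional smc \<psi>" "\<forall>y\<in>V. \<psi> y = 0" "\<psi> (- b) = 1"
      using complex_HB[OF cas, of V "- b"] V0 Vadd Vsmc \<open>- b \<notin> V\<close> unfolding V_def by auto
    note \<psi>lin = cblf_add[OF \<psi>(1)]
    have \<mu>0: "\<mu> \<noteq> 0"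
    proof
      assume "\<mu> = 0"
      then have "smc \<mu> a + 0 - smc \<mu> a * 0 = 0" using smc(7) by simp
      then show False using nq by blast
    qed
    have key: "\<psi> (a * y) = \<psi> y / \<mu>" for y
    proof -
      have "\<psi> (L y) = 0" using \<psi>(2) closure_subset unfolding V_def by blast
      then have "\<psi> y = \<psi> (b * y)" unfolding L_def using \<psi>lin(3) by simp
      also have "b * y = smc \<mu> (a * y)" unfolding b_def by (rule smc(13))
      also have "\<psi> (smc \<mu> (a * y)) = \<mu> * \<psi> (a * y)"
        using \<psi>(1) unfolding cbounded_linear_functional_def by blast
      finally show ?thesis using \<mu>0 by (simp add: field_simps)
    qed
    have grow: "cmod (\<psi> (Orb n)) \<ge> cmod (\<psi> x) \<and> (\<psi> x = 0 \<longrightarrow> \<psi> (Orb n) = 0)" for n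
    proof (induction n)
      case 0 then show ?case by (simp add: Orb_def)
    next
      case (Suc n)
      have e: "\<psi> (Orb (Suc n)) = \<psi> (Orb n) / \<mu>" unfolding OSuc key ..
      have "cmod (\<psi> (Orb n)) \<le> cmod (\<psi> (Orb n) / \<mu>)"
      proof -
        have c: "cmod \<mu> > 0" using \<mu>0 by simp
        have "cmod (\<psi> (Orb n)) / cmod \<mu> * cmod \<mu> \<le> cmod (\<psi> (Orb n)) / cmod \<mu> * 1"
          by (rule mult_left_mono) (use \<mu> in auto)
        then show ?thesis using c by (simp add: norm_divide)
      qed
      then show ?case using Suc e by auto
    qed
    show False
    proof (cases "\<psi> x = 0")
      case True
      obtain n where "cmod (\<psi> (Orb n) - \<psi> (- b)) < 1"
        using wdO[of "{\<psi>}" 1 "- b"] \<psi>(1) by auto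
      then show False using grow[of n] True \<psi>(3) by simp
    next
      case False
      obtain n where "cmod (\<psi> (Orb n) - \<psi> 0) < cmod (\<psi> x)"
        using wdO[of "{\<psi>}" "cmod (\<psi> x)" 0] \<psi>(1) False by auto
      then show False using grow[of n] \<psi>lin(2) by simp
    qed
  qed
qed


end
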